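(* Let $G$ be a finite simple graph of order $n$ and size $m$. If $m\leq 0.0851\,n^2$ and $G$ is $2$-connected, then $\mathrm{nRel}(G;p)$ has at least two distinct points of inflection in $(0,1)$ (points at which the second derivative changes sign).
   Context: For a graph $G$ on $n$ vertices, a connected set is a nonempty vertex subset $C$ such that the induced subgraph $G[C]$ is connected. The node reliability of $G$ is the polynomial \[ \mathrm{nRel}(G;p)=\sum_{C}p^{|C|}(1-p)^{n-|C|}, \] the sum over all connected sets $C$ of $G$. The size of $G$ is its number of edges. *)

theory Defs
  imports "HOL-Analysis.Analysis"
begin

definition simple_graph :: "'a set \<Rightarrow> ('a \<Rightarrow> 'a \<Rightarrow> bool) \<Rightarrow> bool" where
  "simple_graph V E \<longleftrightarrow> finite V \<and> (\<forall>x y. E x y \<longrightarrow> E y x) \<and> (\<forall>x. \<not> E x x)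
     \<and> (\<forall>x y. E x y \<longrightarrow> x \<in> V \<and> y \<in> V)"

definition graph_size :: "('a \<Rightarrow> 'a \<Rightarrow> bool) \<Rightarrow> nat" where
  "graph_size E = card {{x, y} | x y. E x y}"

definition connected_set :: "'a set \<Rightarrow> ('a \<Rightarrow> 'a \<Rightarrow> bool) \<Rightarrow> 'a set \<Rightarrow> bool" where
  "connected_set V E C \<longleftrightarrow> C \<noteq> {} \<and> C \<subseteq> V \<and>
     (\<forall>x\<in>C. \<forall>y\<in>C. (\<lambda>a b. E a b \<and> a \<in> C \<and> b \<in> C)\<^sup>*\<^sup>* x y)"

definition two_connected :: "'a set \<Rightarrow> ('a \<Rightarrow> 'a \<Rightarrow> bool) \<Rightarrow> bool" where
  "two_connected V E \<longleftrightarrow> card V \<ge> 3 \<and> connected_set V E V \<and>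
     (\<forall>v\<in>V. connected_set V E (V - {v}))"

definition nRel :: "'a set \<Rightarrow> ('a \<Rightarrow> 'a \<Rightarrow> bool) \<Rightarrow> real \<Rightarrow> real" where
  "nRel V E p = (\<Sum>C\<in>{C. connected_set V E C}. p ^ card C * (1 - p) ^ (card V - card C))"

definition inflection_point :: "(real \<Rightarrow> real) \<Rightarrow> real \<Rightarrow> bool" where
  "inflection_point f x \<longleftrightarrow> (\<exists>e>0.
     ((\<forall>y. x - e < y \<and> y < x \<longrightarrow> deriv (deriv f) y < 0) \<and>
      (\<forall>y. x < y \<and> y < x + e \<longrightarrow> deriv (deriv f) y > 0)) \<or>
     ((\<forall>y. x - e < y \<and> y < x \<longrightarrow> deriv (deriv f) y > 0) \<and>
      (\<forall>y. x < y \<and> y < x + e \<longrightarrow> deriv (deriv f) y < 0)))"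

end

theory Submission
  imports Defs "HOL-Computational_Algebra.Polynomial"
begin

lemma sign_change_up:
  fixes P :: "real poly"
  shows "a < b \<Longrightarrow> poly P a < 0 \<Longrightarrow> poly P b > 0 \<Longrightarrow>
    \<exists>x. a < x \<and> x < b \<and> (\<exists>e>0. (\<forall>y. x - e < y \<and> y < x \<longrightarrow> poly P y < 0) \<and>
          (\<forall>y. x < y \<and> y < x + e \<longrightarrow> poly P y > 0))"
proof (induction "card {z. a < z \<and> z < b \<and> poly P z = 0}" arbitrary: b rule: less_induct)
  case less
  have P0: "P \<noteq> 0" using less by auto
  define R where "R = {z. a < z \<and> z < b \<and> poly P z = 0}"
  have fin: "finite R" unfolding R_def
    by (rule finite_subset[OF _ poly_roots_finite[OF P0]]) auto
  obtain z0 where z0: "a < z0" "z0 < b" "poly P z0 = 0"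
    using poly_IVT_pos[OF less(2,3,4)] by blast
  have Rne: "R \<noteq> {}" using z0 unfolding R_def by blast
  define z where "z = Max R"
  have zR: "z \<in> R" using Max_in[OF fin Rne] z_def by simp
  hence za: "a < z" and zb: "z < b" and pz: "poly P z = 0" unfolding R_def by auto
  have zmax: "\<And>w. w \<in> R \<Longrightarrow> w \<le> z" using Max_ge[OF fin] z_def by simp
  have right: "poly P y > 0" if "z < y" "y \<le> b" for y
  proof (rule ccontr)
    assume "\<not> poly P y > 0"
    hence "poly P y \<le> 0" by simp
    show False
    proof (cases "poly P y = 0")
      case True
      have "y < b" using True less(4) that by (cases "y = b") auto
      hence "y \<in> R" using True that za unfolding R_def by auto
      thus False using zmax that by force
    next
      case False
      hence "poly P y < 0" using \<open>poly P y \<le> 0\<close> by simp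
      have "y < b" using \<open>poly P y < 0\<close> less(4) that by (cases "y = b") auto
      then obtain w where "y < w" "w < b" "poly P w = 0"
        using poly_IVT_pos[OF _ \<open>poly P y < 0\<close> less(4)] by blast
      hence "w \<in> R" using that za unfolding R_def by auto
      thus False using zmax \<open>y < w\<close> that by force
    qed
  qed
  define a1 where "a1 = Max (insert a (R - {z}))"
  have fin2: "finite (insert a (R - {z}))" using fin by simp
  have a1a: "a \<le> a1" unfolding a1_def using Max_ge[OF fin2] by simp
  have a1z: "a1 < z"
  proof -
    have "a1 \<in> insert a (R - {z})" unfolding a1_def using Max_in[OF fin2] by simp
    moreover have "\<And>w. w \<in> R - {z} \<Longrightarrow> w < z" using zmax by force
    ultimately show ?thesis using za by auto
  qed
  have noroot: "poly P y \<noteq> 0" if "a1 < y" "y < z" for y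
  proof
    assume "poly P y = 0"
    hence "y \<in> R - {z}" using that a1a zb unfolding R_def by auto
    hence "y \<le> a1" unfolding a1_def using Max_ge[OF fin2] by simp
    thus False using that by simp
  qed
  show ?case
  proof (cases "\<exists>y. a1 < y \<and> y < z \<and> poly P y < 0")
    case True
    then obtain y0 where y0: "a1 < y0" "y0 < z" "poly P y0 < 0" by blast
    have left: "poly P y < 0" if "a1 < y" "y < z" for y
    proof (rule ccontr)
      assume "\<not> poly P y < 0"
      hence "poly P y > 0" using noroot[OF that] by simp
      show False
      proof (cases "y0 < y")
        case True
        then obtain w where "y0 < w" "w < y" "poly P w = 0"
          using poly_IVT_pos[OF True y0(3) \<open>poly P y > 0\<close>] by blast
        thus False using noroot[of w] y0 that by simp
      next
        case False
        hence "y < y0" using \<open>poly P y > 0\<close> y0(3) by (cases "y = y0") auto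
        then obtain w where "y < w" "w < y0" "poly P w = 0"
          using poly_IVT_neg[OF _ \<open>poly P y > 0\<close> y0(3)] by blast
        thus False using noroot[of w] y0 that by simp
      qed
    qed
    show ?thesis
    proof (intro exI conjI)
      show "a < z" "z < b" by fact+
      show "min (z - a1) (b - z) > 0" using a1z zb by simp
      show "\<forall>y. z - min (z - a1) (b - z) < y \<and> y < z \<longrightarrow> poly P y < 0"
        using left by auto
      show "\<forall>y. z < y \<and> y < z + min (z - a1) (b - z) \<longrightarrow> poly P y > 0"
        using right by auto
    qed
  next
    case False
    define b' where "b' = (a1 + z) / 2"
    have b'1: "a1 < b'" "b' < z" using a1z unfolding b'_def by auto
    have "\<not> poly P b' < 0" using False b'1 by blast
    hence pb': "poly P b' > 0" using noroot[OF b'1] by linarith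
    have ab': "a < b'" using a1a b'1 by simp
    have sub: "{w. a < w \<and> w < b' \<and> poly P w = 0} \<subset> R"
    proof
      show "{w. a < w \<and> w < b' \<and> poly P w = 0} \<subseteq> R" unfolding R_def using b'1 zb by auto
      show "{w. a < w \<and> w < b' \<and> poly P w = 0} \<noteq> R" using zR b'1 by auto
    qed
    have "card {w. a < w \<and> w < b' \<and> poly P w = 0} < card {z. a < z \<and> z < b \<and> poly P z = 0}"
      using psubset_card_mono[OF fin sub] unfolding R_def by simp
    from less(1)[OF this ab' less(3) pb'] obtain x where
      "a < x" "x < b'" "\<exists>e>0. (\<forall>y. x - e < y \<and> y < x \<longrightarrow> poly P y < 0) \<and>
          (\<forall>y. x < y \<and> y < x + e \<longrightarrow> poly P y > 0)" by blast
    thus ?thesis using b'1 zb by (meson less_trans)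
  qed
qed

lemma pow_sum_one:
  fixes p :: real
  assumes "finite S"
  shows "(\<Sum>C\<in>Pow S. p ^ card C * (1 - p) ^ (card S - card C)) = 1"
  using assms
proof (induction S rule: finite_induct)
  case empty
  then show ?case by simp
next
  case (insert x S)
  have disj: "Pow S \<inter> insert x ` Pow S = {}" using insert(2) by auto
  have inj: "inj_on (insert x) (Pow S)" using insert(2) unfolding inj_on_def by (meson PowD insert_ident subsetD)
  have fin1: "finite (Pow S)" using insert(1) by simp
  have cS: "card (insert x S) = Suc (card S)" using insert by simp
  have "(\<Sum>C\<in>Pow (insert x S). p ^ card C * (1 - p) ^ (card (insert x S) - card C))
     = (\<Sum>C\<in>Pow S. p ^ card C * (1 - p) ^ (Suc (card S) - card C))
       + (\<Sum>C\<in>insert x ` Pow S. p ^ card C * (1 - p) ^ (Suc (card S) - card C))"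
    unfolding Pow_insert cS by (rule sum.union_disjoint) (use fin1 disj in auto)
  also have "(\<Sum>C\<in>insert x ` Pow S. p ^ card C * (1 - p) ^ (Suc (card S) - card C))
      = (\<Sum>C\<in>Pow S. p ^ Suc (card C) * (1 - p) ^ (card S - card C))"
  proof (subst sum.reindex[OF inj], rule sum.cong)
    fix C assume "C \<in> Pow S"
    hence "finite C" "x \<notin> C" using insert finite_subset by auto
    thus "((\<lambda>C. p ^ card C * (1 - p) ^ (Suc (card S) - card C)) \<circ> insert x) C =
         p ^ Suc (card C) * (1 - p) ^ (card S - card C)" by simp
  qed simp
  also have "(\<Sum>C\<in>Pow S. p ^ card C * (1 - p) ^ (Suc (card S) - card C))
      = (\<Sum>C\<in>Pow S. (1 - p) * (p ^ card C * (1 - p) ^ (card S - card C)))"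
  proof (rule sum.cong)
    fix C assume "C \<in> Pow S"
    hence "card C \<le> card S" using insert(1) by (simp add: card_mono)
    hence "Suc (card S) - card C = Suc (card S - card C)" by simp
    thus "p ^ card C * (1 - p) ^ (Suc (card S) - card C) = (1 - p) * (p ^ card C * (1 - p) ^ (card S - card C))"
      by simp
  qed simp
  also have "(\<Sum>C\<in>Pow S. p ^ Suc (card C) * (1 - p) ^ (card S - card C))
      = (\<Sum>C\<in>Pow S. p * (p ^ card C * (1 - p) ^ (card S - card C)))"
    by (simp add: mult.assoc)
  finally show ?case by (simp add: sum_distrib_left[symmetric] insert(3))
qed

definition dd :: "nat \<Rightarrow> nat \<Rightarrow> real \<Rightarrow> real" where
  "dd k j p = real k * p ^ (k - 1) * (1 - p) ^ j - real j * p ^ k * (1 - p) ^ (j - 1)"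

definition ww :: "nat \<Rightarrow> nat \<Rightarrow> real \<Rightarrow> real" where
  "ww k j p = real k * real (k - 1) * p ^ (k - 2) * (1 - p) ^ j
     - 2 * real k * real j * p ^ (k - 1) * (1 - p) ^ (j - 1)
     + real j * real (j - 1) * p ^ k * (1 - p) ^ (j - 2)"

lemma term_deriv1: "((\<lambda>p. p ^ k * (1 - p) ^ j) has_real_derivative dd k j p) (at p)"
  unfolding dd_def
  by (auto intro!: derivative_eq_intros simp: algebra_simps)

lemma term_deriv2: "((\<lambda>p. dd k j p) has_real_derivative ww k j p) (at p)"
  unfolding dd_def ww_def
  by (auto intro!: derivative_eq_intros simp: algebra_simps numeral_2_eq_2)

definition Ed :: "('a \<Rightarrow> 'a \<Rightarrow> bool) \<Rightarrow> 'a set set" where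
  "Ed E = {{x, y} | x y. E x y}"

lemma conn_finite: "simple_graph V E \<Longrightarrow> connected_set V E C \<Longrightarrow> finite C"
  unfolding simple_graph_def connected_set_def using finite_subset by blast

lemma conn_edges:
  assumes sg: "simple_graph V E" and cs: "connected_set V E C"
  shows "card C - 1 \<le> card {e \<in> Ed E. e \<subseteq> C}"
proof -
  have finC: "finite C" using conn_finite[OF sg cs] .
  obtain r where r: "r \<in> C" using cs unfolding connected_set_def by blast
  define R where "R = (\<lambda>a b. E a b \<and> a \<in> C \<and> b \<in> C)"
  have reach: "\<exists>n. (R ^^ n) v r" if "v \<in> C" for v
    using cs that r unfolding connected_set_def R_def by (simp add: rtranclp_power)
  define d where "d v = (LEAST n. (R ^^ n) v r)" for v
  have dR: "(R ^^ d v) v r" if "v \<in> C" for v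
    unfolding d_def using reach[OF that] by (rule LeastI_ex)
  have dle: "d u \<le> n" if "(R ^^ n) u r" for u n
    unfolding d_def using that by (rule Least_le)
  have parex: "\<exists>u. R v u \<and> d u < d v" if "v \<in> C" "v \<noteq> r" for v
  proof -
    have "d v \<noteq> 0" using dR[OF that(1)] that(2) by (cases "d v") auto
    then obtain m where m: "d v = Suc m" by (cases "d v") auto
    from dR[OF that(1)] m obtain u where "R v u" "(R ^^ m) u r"
      by (metis relpowp_Suc_D2)
    thus ?thesis using dle m by fastforce
  qed
  define par where "par v = (SOME u. R v u \<and> d u < d v)" for v
  have par: "R v (par v) \<and> d (par v) < d v" if "v \<in> C" "v \<noteq> r" for v
    unfolding par_def using parex[OF that] by (rule someI_ex)
  define phi where "phi v = {v, par v}" for v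
  have img: "phi ` (C - {r}) \<subseteq> {e \<in> Ed E. e \<subseteq> C}"
  proof
    fix e assume "e \<in> phi ` (C - {r})"
    then obtain v where v: "v \<in> C" "v \<noteq> r" "e = {v, par v}" unfolding phi_def by auto
    from par[OF v(1,2)] have "E v (par v)" "par v \<in> C" unfolding R_def by auto
    thus "e \<in> {e \<in> Ed E. e \<subseteq> C}" using v unfolding Ed_def by auto
  qed
  have inj: "inj_on phi (C - {r})"
  proof (rule inj_onI)
    fix v v' assume v: "v \<in> C - {r}" and v': "v' \<in> C - {r}" and eq: "phi v = phi v'"
    show "v = v'"
    proof (rule ccontr)
      assume ne: "v \<noteq> v'"
      from eq ne have "v = par v'" "v' = par v" unfolding phi_def by (auto simp: doubleton_eq_iff)
      thus False using par[of v] par[of v'] v v' by auto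
    qed
  qed
  have fin2: "finite {e \<in> Ed E. e \<subseteq> C}"
    by (rule finite_subset[of _ "Pow C"]) (use finC in auto)
  have "card (C - {r}) \<le> card {e \<in> Ed E. e \<subseteq> C}"
    by (rule card_inj_on_le[OF inj img fin2])
  thus ?thesis using r finC by simp
qed

lemma Ed_finite: "simple_graph V E \<Longrightarrow> finite (Ed E)"
  unfolding simple_graph_def Ed_def
  by (rule finite_subset[of _ "Pow V"]) auto

lemma Ed_two:
  assumes sg: "simple_graph V E" and e: "e \<in> Ed E"
  shows "e \<subseteq> V \<and> card e = 2"
proof -
  obtain x y where xy: "E x y" "e = {x, y}" using e unfolding Ed_def by auto
  have "x \<noteq> y" using sg xy unfolding simple_graph_def by auto
  moreover have "x \<in> V" "y \<in> V" using sg xy unfolding simple_graph_def by auto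
  ultimately show ?thesis using xy by auto
qed

lemma card_filter_sum: "finite A \<Longrightarrow> card {x \<in> A. P x} = (\<Sum>x\<in>A. if P x then 1 else 0)"
  by (simp add: sum.inter_filter[symmetric])

lemma graph_size_Ed: "graph_size E = card (Ed E)"
  unfolding graph_size_def Ed_def by simp

lemma card_supersets:
  assumes finV: "finite V" and eV: "e \<subseteq> V" and ce: "card e = 2" and k: "2 \<le> k"
  shows "card {C. (C \<subseteq> V \<and> card C = k) \<and> e \<subseteq> C} = (card V - 2) choose (k - 2)"
proof -
  have fine: "finite e" using finV eV finite_subset by blast
  have eq: "{C. (C \<subseteq> V \<and> card C = k) \<and> e \<subseteq> C} = (\<lambda>D. D \<union> e) ` {D. D \<subseteq> V - e \<and> card D = k - 2}"
  proof (intro equalityI subsetI)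
    fix C assume C: "C \<in> {C. (C \<subseteq> V \<and> card C = k) \<and> e \<subseteq> C}"
    have finC: "finite C" using C finV finite_subset by blast
    have "card (C - e) = k - 2" using C ce fine by (simp add: card_Diff_subset)
    moreover have "C = (C - e) \<union> e" using C by auto
    ultimately show "C \<in> (\<lambda>D. D \<union> e) ` {D. D \<subseteq> V - e \<and> card D = k - 2}" using C by blast
  next
    fix C assume "C \<in> (\<lambda>D. D \<union> e) ` {D. D \<subseteq> V - e \<and> card D = k - 2}"
    then obtain D where D: "D \<subseteq> V - e" "card D = k - 2" "C = D \<union> e" by auto
    have finD: "finite D" using D finV finite_subset by blast
    have "D \<inter> e = {}" using D by auto
    hence "card C = k" using D ce k finD fine by (simp add: card_Un_disjoint)
    thus "C \<in> {C. (C \<subseteq> V \<and> card C = k) \<and> e \<subseteq> C}" using D eV by auto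
  qed
  have inj: "inj_on (\<lambda>D. D \<union> e) {D. D \<subseteq> V - e \<and> card D = k - 2}"
    unfolding inj_on_def by blast
  have "card {C. (C \<subseteq> V \<and> card C = k) \<and> e \<subseteq> C} = card {D. D \<subseteq> V - e \<and> card D = k - 2}"
    unfolding eq by (rule card_image[OF inj])
  also have "\<dots> = card (V - e) choose (k - 2)" using finV by (simp add: n_subsets)
  also have "card (V - e) = card V - 2" using eV ce fine by (simp add: card_Diff_subset)
  finally show ?thesis .
qed

lemma double_count:
  assumes sg: "simple_graph V E" and k: "2 \<le> k"
  shows "(\<Sum>C\<in>{C. C \<subseteq> V \<and> card C = k}. card {e \<in> Ed E. e \<subseteq> C})
    = card (Ed E) * ((card V - 2) choose (k - 2))"
proof -
  have finV: "finite V" using sg unfolding simple_graph_def by simp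
  define K where "K = {C. C \<subseteq> V \<and> card C = k}"
  have finK: "finite K" unfolding K_def by (rule finite_subset[of _ "Pow V"]) (use finV in auto)
  have finEd: "finite (Ed E)" using Ed_finite[OF sg] .
  have "(\<Sum>C\<in>K. card {e \<in> Ed E. e \<subseteq> C}) = (\<Sum>C\<in>K. \<Sum>e\<in>Ed E. if e \<subseteq> C then 1 else 0)"
    using finEd by (simp add: card_filter_sum)
  also have "\<dots> = (\<Sum>e\<in>Ed E. \<Sum>C\<in>K. if e \<subseteq> C then 1 else 0)" by (rule sum.swap)
  also have "\<dots> = (\<Sum>e\<in>Ed E. card {C \<in> K. e \<subseteq> C})"
    using finK by (simp add: card_filter_sum)
  also have "\<dots> = (\<Sum>e\<in>Ed E. (card V - 2) choose (k - 2))"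
  proof (rule sum.cong)
    fix e assume "e \<in> Ed E"
    from Ed_two[OF sg this] have "e \<subseteq> V" "card e = 2" by auto
    from card_supersets[OF finV this k] show "card {C \<in> K. e \<subseteq> C} = (card V - 2) choose (k - 2)"
      unfolding K_def by simp
  qed simp
  finally show ?thesis unfolding K_def by simp
qed

definition Nk :: "'a set \<Rightarrow> ('a \<Rightarrow> 'a \<Rightarrow> bool) \<Rightarrow> nat \<Rightarrow> nat" where
  "Nk V E k = card {C. connected_set V E C \<and> card C = k}"

lemma Nk_bound:
  assumes sg: "simple_graph V E" and k: "2 \<le> k"
  shows "Nk V E k * (k - 1) \<le> graph_size E * ((card V - 2) choose (k - 2))"
proof -
  have finV: "finite V" using sg unfolding simple_graph_def by simp
  define A where "A = {C. connected_set V E C \<and> card C = k}"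
  define K where "K = {C. C \<subseteq> V \<and> card C = k}"
  have AK: "A \<subseteq> K" unfolding A_def K_def connected_set_def by auto
  have finK: "finite K" unfolding K_def by (rule finite_subset[of _ "Pow V"]) (use finV in auto)
  have "Nk V E k * (k - 1) = (\<Sum>C\<in>A. k - 1)" unfolding Nk_def A_def by simp
  also have "\<dots> \<le> (\<Sum>C\<in>A. card {e \<in> Ed E. e \<subseteq> C})"
    by (rule sum_mono) (use conn_edges[OF sg] in \<open>auto simp: A_def\<close>)
  also have "\<dots> \<le> (\<Sum>C\<in>K. card {e \<in> Ed E. e \<subseteq> C})"
    by (rule sum_mono2[OF finK AK]) auto
  also have "\<dots> = graph_size E * ((card V - 2) choose (k - 2))"
    unfolding K_def graph_size_Ed using double_count[OF sg k] .
  finally show ?thesis .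
qed

lemma Nk_one:
  assumes sg: "simple_graph V E"
  shows "Nk V E 1 = card V"
proof -
  have "{C. connected_set V E C \<and> card C = 1} = (\<lambda>v. {v}) ` V"
  proof (intro equalityI subsetI)
    fix C assume "C \<in> {C. connected_set V E C \<and> card C = 1}"
    then obtain v where "C = {v}" "v \<in> V" unfolding connected_set_def by (auto simp: card_1_singleton_iff)
    thus "C \<in> (\<lambda>v. {v}) ` V" by auto
  next
    fix C assume "C \<in> (\<lambda>v. {v}) ` V"
    then obtain v where v: "C = {v}" "v \<in> V" by auto
    have "connected_set V E {v}" unfolding connected_set_def using v(2) by auto
    thus "C \<in> {C. connected_set V E C \<and> card C = 1}" using v by auto
  qed
  thus ?thesis unfolding Nk_def by (simp add: card_image)
qed

lemma Nk_zero:
  assumes sg: "simple_graph V E"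
  shows "Nk V E 0 = 0"
proof -
  have "{C. connected_set V E C \<and> card C = 0} = {}"
  proof (intro equalityI subsetI)
    fix C assume C: "C \<in> {C. connected_set V E C \<and> card C = 0}"
    hence "finite C" "C \<noteq> {}" using conn_finite[OF sg] unfolding connected_set_def by auto
    thus "C \<in> {}" using C by simp
  qed simp
  thus ?thesis unfolding Nk_def by (metis card.empty)
qed

lemma size_ge:
  assumes sg: "simple_graph V E" and cs: "connected_set V E V"
  shows "card V - 1 \<le> graph_size E"
proof -
  have "card V - 1 \<le> card {e \<in> Ed E. e \<subseteq> V}" by (rule conn_edges[OF sg cs])
  also have "\<dots> \<le> card (Ed E)" by (rule card_mono[OF Ed_finite[OF sg]]) auto
  finally show ?thesis unfolding graph_size_Ed .
qed

definition Conn :: "'a set \<Rightarrow> ('a \<Rightarrow> 'a \<Rightarrow> bool) \<Rightarrow> 'a set set" where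
  "Conn V E = {C. connected_set V E C}"

definition g1 :: "'a set \<Rightarrow> ('a \<Rightarrow> 'a \<Rightarrow> bool) \<Rightarrow> real \<Rightarrow> real" where
  "g1 V E p = (\<Sum>C\<in>Conn V E. dd (card C) (card V - card C) p)"

definition g2 :: "'a set \<Rightarrow> ('a \<Rightarrow> 'a \<Rightarrow> bool) \<Rightarrow> real \<Rightarrow> real" where
  "g2 V E p = (\<Sum>C\<in>Conn V E. ww (card C) (card V - card C) p)"

definition Pf :: "'a set \<Rightarrow> ('a \<Rightarrow> 'a \<Rightarrow> bool) \<Rightarrow> real poly" where
  "Pf V E = (\<Sum>C\<in>Conn V E. [:0, 1:] ^ card C * [:1, -1:] ^ (card V - card C))"

lemma nRel_alt: "nRel V E = (\<lambda>p. \<Sum>C\<in>Conn V E. p ^ card C * (1 - p) ^ (card V - card C))"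
  by (simp add: fun_eq_iff nRel_def Conn_def)

lemma nRel_poly: "nRel V E = poly (Pf V E)"
  unfolding nRel_alt Pf_def by (simp add: fun_eq_iff poly_sum)

lemma nRel_D1: "DERIV (nRel V E) p :> g1 V E p"
  unfolding nRel_alt g1_def by (rule DERIV_sum) (rule term_deriv1)

lemma g1_D: "DERIV (g1 V E) p :> g2 V E p"
proof -
  have "g1 V E = (\<lambda>p. \<Sum>C\<in>Conn V E. dd (card C) (card V - card C) p)"
    by (simp add: fun_eq_iff g1_def)
  thus ?thesis unfolding g2_def by (simp only:) (rule DERIV_sum, rule term_deriv2)
qed

lemma deriv2_eq: "deriv (deriv (nRel V E)) = g2 V E"
proof -
  have eq: "deriv (nRel V E) = g1 V E" by (rule ext, rule DERIV_imp_deriv[OF nRel_D1])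
  show ?thesis by (simp only: eq) (rule ext, rule DERIV_imp_deriv[OF g1_D])
qed

lemma g2_poly: "g2 V E = poly (pderiv (pderiv (Pf V E)))"
proof -
  have "g1 V E x = poly (pderiv (Pf V E)) x" for x
    using nRel_D1[of V E x] poly_DERIV[of "Pf V E" x] unfolding nRel_poly
    by (rule DERIV_unique)
  hence eq: "g1 V E = poly (pderiv (Pf V E))" by (simp add: fun_eq_iff)
  have "g2 V E x = poly (pderiv (pderiv (Pf V E))) x" for x
    using g1_D[of V E x] poly_DERIV[of "pderiv (Pf V E)" x] unfolding eq
    by (rule DERIV_unique)
  thus ?thesis by (simp add: fun_eq_iff)
qed

lemma Conn_finite: "simple_graph V E \<Longrightarrow> finite (Conn V E)"
  unfolding Conn_def connected_set_def simple_graph_def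
  by (rule finite_subset[of _ "Pow V"]) auto

lemma group_card:
  fixes h :: "nat \<Rightarrow> real"
  assumes sg: "simple_graph V E"
  shows "(\<Sum>C\<in>Conn V E. h (card C)) = (\<Sum>k\<le>card V. real (Nk V E k) * h k)"
proof -
  have finV: "finite V" using sg unfolding simple_graph_def by simp
  have fin: "finite (Conn V E)" by (rule Conn_finite[OF sg])
  have le: "card C \<le> card V" if "C \<in> Conn V E" for C
    using that finV unfolding Conn_def connected_set_def by (simp add: card_mono)
  have "(\<Sum>C\<in>Conn V E. h (card C)) = (\<Sum>C\<in>Conn V E. \<Sum>k\<le>card V. if card C = k then h k else 0)"
    by (rule sum.cong) (use le in auto)
  also have "\<dots> = (\<Sum>k\<le>card V. \<Sum>C\<in>Conn V E. if card C = k then h k else 0)"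
    by (rule sum.swap)
  also have "\<dots> = (\<Sum>k\<le>card V. real (Nk V E k) * h k)"
  proof (rule sum.cong)
    fix k
    have "(\<Sum>C\<in>Conn V E. if card C = k then h k else 0) = (\<Sum>C\<in>{C \<in> Conn V E. card C = k}. h k)"
      by (rule sum.inter_filter[OF fin, symmetric])
    also have "\<dots> = real (Nk V E k) * h k"
      unfolding Nk_def Conn_def by simp
    finally show "(\<Sum>C\<in>Conn V E. if card C = k then h k else 0) = real (Nk V E k) * h k" .
  qed simp
  finally show ?thesis .
qed

lemma g2_group: "simple_graph V E \<Longrightarrow> g2 V E p = (\<Sum>k\<le>card V. real (Nk V E k) * ww k (card V - k) p)"
  unfolding g2_def by (rule group_card)

lemma g1_group: "simple_graph V E \<Longrightarrow> g1 V E p = (\<Sum>k\<le>card V. real (Nk V E k) * dd k (card V - k) p)"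
  unfolding g1_def by (rule group_card)

lemma nRel_group: "simple_graph V E \<Longrightarrow> nRel V E p = (\<Sum>k\<le>card V. real (Nk V E k) * (p ^ k * (1 - p) ^ (card V - k)))"
  unfolding nRel_alt by (rule group_card)

lemma Nk_top:
  assumes sg: "simple_graph V E" and cV: "connected_set V E V"
  shows "Nk V E (card V) = 1"
proof -
  have finV: "finite V" using sg unfolding simple_graph_def by simp
  have "{C. connected_set V E C \<and> card C = card V} = {V}"
  proof (intro equalityI subsetI)
    fix C assume "C \<in> {C. connected_set V E C \<and> card C = card V}"
    hence "C \<subseteq> V" "card C = card V" unfolding connected_set_def by auto
    hence "C = V" using finV by (simp add: card_subset_eq)
    thus "C \<in> {V}" by simp
  qed (use cV in auto)
  thus ?thesis unfolding Nk_def by simp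
qed

lemma Nk_top1:
  assumes sg: "simple_graph V E" and tc: "two_connected V E"
  shows "card V \<le> Nk V E (card V - 1)"
proof -
  have finV: "finite V" using sg unfolding simple_graph_def by simp
  have sub: "(\<lambda>v. V - {v}) ` V \<subseteq> {C. connected_set V E C \<and> card C = card V - 1}"
    using tc finV unfolding two_connected_def by auto
  have inj: "inj_on (\<lambda>v. V - {v}) V" unfolding inj_on_def by blast
  have fin: "finite {C. connected_set V E C \<and> card C = card V - 1}"
    by (rule finite_subset[of _ "Pow V"]) (use finV in \<open>auto simp: connected_set_def\<close>)
  show ?thesis unfolding Nk_def using card_inj_on_le[OF inj sub fin] .
qed

lemma g2_zero:
  assumes sg: "simple_graph V E" and n: "3 \<le> card V"
    and m: "real (graph_size E) \<le> 0.0851 * (real (card V))\<^sup>2"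
  shows "g2 V E 0 < 0"
proof -
  obtain r0 where "card V = 3 + r0" using le_Suc_ex[OF n] by blast
  hence r: "card V = Suc (Suc (Suc r0))" by simp
  define r where "r = r0"
  note r = r[folded r_def]
  define f where "f k = real (Nk V E k) * ww k (card V - k) 0" for k
  have "g2 V E 0 = (\<Sum>k\<le>card V. f k)" unfolding f_def by (rule g2_group[OF sg])
  also have "\<dots> = f 0 + (f 1 + (f 2 + (\<Sum>i\<le>r. f (Suc (Suc (Suc i))))))"
    unfolding r by (simp only: sum.atMost_Suc_shift One_nat_def numeral_2_eq_2)
  also have "(\<Sum>i\<le>r. f (Suc (Suc (Suc i)))) = 0"
    unfolding f_def ww_def by simp
  also have "f 0 = 0" unfolding f_def using Nk_zero[OF sg] by simp
  also have "f 1 = - 2 * real (card V) * (real (card V) - 1)"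
    unfolding f_def ww_def Nk_one[OF sg] using n by (simp add: of_nat_diff algebra_simps)
  also have "f 2 = 2 * real (Nk V E 2)" unfolding f_def ww_def by simp
  finally have eq: "g2 V E 0 = - 2 * real (card V) * (real (card V) - 1) + 2 * real (Nk V E 2)" by simp
  have "Nk V E 2 * (2 - 1) \<le> graph_size E * ((card V - 2) choose (2 - 2))" by (rule Nk_bound[OF sg]) simp
  hence "real (Nk V E 2) \<le> real (graph_size E)" by simp
  hence "g2 V E 0 \<le> - 2 * real (card V) * (real (card V) - 1) + 2 * (0.0851 * (real (card V))\<^sup>2)"
    using eq m by linarith
  also have "\<dots> < 0"
  proof -
    have "real (card V) \<ge> 3" using n by simp
    thus ?thesis by (simp add: power2_eq_square algebra_simps)
  qed
  finally show ?thesis .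
qed

lemma g1_one:
  assumes sg: "simple_graph V E" and tc: "two_connected V E"
  shows "g1 V E 1 \<le> 0"
proof -
  have cV: "connected_set V E V" and n: "3 \<le> card V" using tc unfolding two_connected_def by auto
  have dd1: "dd k (card V - k) 1 = (if k = card V then real (card V) else 0) - (if k = card V - 1 then 1 else 0)"
    if "k \<le> card V" for k
  proof -
    have "card V - k = 0 \<or> card V - k = 1 \<or> card V - k \<ge> 2" by arith
    thus ?thesis using that n unfolding dd_def by (auto simp: numeral_2_eq_2 zero_power)
  qed
  have "g1 V E 1 = (\<Sum>k\<le>card V. real (Nk V E k) * dd k (card V - k) 1)" by (rule g1_group[OF sg])
  also have "\<dots> = (\<Sum>k\<le>card V. (if k = card V then real (Nk V E k) * real (card V) else 0)
        - (if k = card V - 1 then real (Nk V E k) else 0))"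
    by (rule sum.cong) (auto simp: dd1 algebra_simps)
  also have "\<dots> = real (Nk V E (card V)) * real (card V) - real (Nk V E (card V - 1))"
    by (simp add: sum_subtractf)
  also have "\<dots> \<le> 0" using Nk_top[OF sg cV] Nk_top1[OF sg tc] by simp
  finally show ?thesis .
qed

lemma nRel_one:
  assumes sg: "simple_graph V E" and cV: "connected_set V E V"
  shows "nRel V E 1 = 1"
proof -
  have "nRel V E 1 = (\<Sum>k\<le>card V. real (Nk V E k) * (1 ^ k * (1 - 1) ^ (card V - k)))"
    by (rule nRel_group[OF sg])
  also have "\<dots> = (\<Sum>k\<le>card V. if k = card V then real (Nk V E k) else 0)"
    by (rule sum.cong) (auto simp: zero_power)
  also have "\<dots> = 1" using Nk_top[OF sg cV] by simp
  finally show ?thesis .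
qed

lemma nRel_lt_one:
  assumes sg: "simple_graph V E" and b: "0 \<le> b" "b < 1"
  shows "nRel V E b < 1"
proof -
  have finV: "finite V" using sg unfolding simple_graph_def by simp
  define f where "f (C::'a set) = b ^ card C * (1 - b) ^ (card V - card C)" for C
  have "nRel V E b = (\<Sum>C\<in>Conn V E. f C)" unfolding nRel_alt f_def by simp
  also have "\<dots> \<le> (\<Sum>C\<in>Pow V - {{}}. f C)"
    by (rule sum_mono2) (use finV b in \<open>auto simp: f_def Conn_def connected_set_def\<close>)
  also have "\<dots> = (\<Sum>C\<in>Pow V. f C) - f {}"
    using finV by (simp add: sum_diff1)
  finally have A: "nRel V E b \<le> (\<Sum>C\<in>Pow V. f C) - f {}" .
  have "(\<Sum>C\<in>Pow V. f C) = 1" unfolding f_def by (rule pow_sum_one[OF finV])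
  moreover have "f {} > 0" unfolding f_def using b by simp
  ultimately show ?thesis using A by linarith
qed

lemma ch3: "real ((t+9) choose 3) = (real t+9)*(real t+8)*(real t+7)/6"
proof -
  have "real ((t+9) choose 3) = (\<Prod>i = 0..<3. real (t + 9 - i) / real (3 - i))"
    by (rule binomial_altdef_of_nat) simp
  also have "\<dots> = (real t+9)*(real t+8)*(real t+7)/6"
    by (simp add: eval_nat_numeral prod.atLeast0_lessThan_Suc add.commute)
  finally show ?thesis .
qed

lemma ch2: "real ((t+9) choose 2) = (real t+9)*(real t+8)/2"
proof -
  have "real ((t+9) choose 2) = (\<Prod>i = 0..<2. real (t + 9 - i) / real (2 - i))"
    by (rule binomial_altdef_of_nat) simp
  also have "\<dots> = (real t+9)*(real t+8)/2"
    by (simp add: eval_nat_numeral prod.atLeast0_lessThan_Suc add.commute)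
  finally show ?thesis .
qed

lemma ww1_eq: "ww 1 (t+10) p = (1-p)^t * ((1-p)^4 * (-2*(real t+10)*(1-p)^5 + (real t+10)*(real t+9)*p*(1-p)^4))"
  by (simp add: ww_def power_add eval_nat_numeral algebra_simps)

lemma ww2_eq: "ww 2 (t+9) p = (1-p)^t * ((1-p)^4 * (2*(1-p)^5 - 4*(real t+9)*p*(1-p)^4 + (real t+9)*(real t+8)*p^2*(1-p)^3))"
  by (simp add: ww_def power_add eval_nat_numeral algebra_simps)

lemma ww3_eq: "ww 3 (t+8) p = (1-p)^t * ((1-p)^4 * (6*p*(1-p)^4 - 6*(real t+8)*p^2*(1-p)^3 + (real t+8)*(real t+7)*p^3*(1-p)^2))"
  by (simp add: ww_def power_add eval_nat_numeral algebra_simps)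

lemma ww4_eq: "ww 4 (t+7) p = (1-p)^t * ((1-p)^4 * (12*p^2*(1-p)^3 - 8*(real t+7)*p^3*(1-p)^2 + (real t+7)*(real t+6)*p^4*(1-p)))"
  by (simp add: ww_def power_add eval_nat_numeral algebra_simps)

lemma ww5_eq: "ww 5 (t+6) p = (1-p)^t * ((1-p)^4 * (20*p^3*(1-p)^2 - 10*(real t+6)*p^4*(1-p) + (real t+6)*(real t+5)*p^5))"
  by (simp add: ww_def power_add eval_nat_numeral algebra_simps)


lemma sub1: "-2*(T+10)*((T+7)*u)^5 + (T+10)*(T+9)*(3*u)*((T+7)*u)^4
   = u^5 * (-2*(T+10)*(T+7)^5 + 3*(T+10)*(T+9)*(T+7)^4)" for T u :: real
  by (simp add: power_mult_distrib algebra_simps eval_nat_numeral)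

lemma sub2: "2*((T+7)*u)^5 - 4*(T+9)*(3*u)*((T+7)*u)^4 + (T+9)*(T+8)*(3*u)^2*((T+7)*u)^3
   = u^5 * (2*(T+7)^5 - 12*(T+9)*(T+7)^4 + 9*(T+9)*(T+8)*(T+7)^3)" for T u :: real
  by (simp add: power_mult_distrib algebra_simps eval_nat_numeral)

lemma sub3: "6*(3*u)*((T+7)*u)^4 - 6*(T+8)*(3*u)^2*((T+7)*u)^3 + (T+8)*(T+7)*(3*u)^3*((T+7)*u)^2
   = u^5 * (18*(T+7)^4 - 54*(T+8)*(T+7)^3 + 27*(T+8)*(T+7)*(T+7)^2)" for T u :: real
  by (simp add: power_mult_distrib algebra_simps eval_nat_numeral)

lemma sub4: "12*(3*u)^2*((T+7)*u)^3 - 8*(T+7)*(3*u)^3*((T+7)*u)^2 + (T+7)*(T+6)*(3*u)^4*((T+7)*u)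
   = u^5 * (108*(T+7)^3 - 216*(T+7)*(T+7)^2 + 81*(T+7)*(T+6)*(T+7))" for T u :: real
  by (simp add: power_mult_distrib algebra_simps eval_nat_numeral)

lemma sub5: "20*(3*u)^3*((T+7)*u)^2 - 10*(T+6)*(3*u)^4*((T+7)*u) + (T+6)*(T+5)*(3*u)^5
   = u^5 * (540*(T+7)^2 - 810*(T+6)*(T+7) + 243*(T+6)*(T+5))" for T u :: real
  by (simp add: power_mult_distrib algebra_simps eval_nat_numeral)

lemma neg2: "0 \<le> T \<Longrightarrow> 2*(T+7)^5 - 12*(T+9)*(T+7)^4 + 9*(T+9)*(T+8)*(T+7)^3 \<le> 0" for T :: real
proof -
  assume T: "0 \<le> T"
  have "2*(T+7)^5 - 12*(T+9)*(T+7)^4 + 9*(T+9)*(T+8)*(T+7)^3 = -(3430 + 5243*T + 2170*T^2 + 388*T^3 + 32*T^4 + T^5)"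
    by (simp add: algebra_simps eval_nat_numeral)
  also have "\<dots> \<le> 0"
  proof -
    have "0 \<le> T^2" "0 \<le> T^3" "0 \<le> T^4" "0 \<le> T^5" using T by simp_all
    thus ?thesis using T by linarith
  qed
  finally show ?thesis .
qed

lemma neg3: "0 \<le> T \<Longrightarrow> 18*(T+7)^4 - 54*(T+8)*(T+7)^3 + 27*(T+8)*(T+7)*(T+7)^2 \<le> 0" for T :: real
proof -
  assume T: "0 \<le> T"
  have "18*(T+7)^4 - 54*(T+8)*(T+7)^3 + 27*(T+8)*(T+7)*(T+7)^2 = -(30870 + 16317*T + 3213*T^2 + 279*T^3 + 9*T^4)"
    by (simp add: algebra_simps eval_nat_numeral)
  also have "\<dots> \<le> 0"
  proof -
    have "0 \<le> T^2" "0 \<le> T^3" "0 \<le> T^4" "0 \<le> T^5" using T by simp_all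
    thus ?thesis using T by linarith
  qed
  finally show ?thesis .
qed

lemma neg4: "0 \<le> T \<Longrightarrow> 108*(T+7)^3 - 216*(T+7)*(T+7)^2 + 81*(T+7)*(T+6)*(T+7) \<le> 0" for T :: real
proof -
  assume T: "0 \<le> T"
  have "108*(T+7)^3 - 216*(T+7)*(T+7)^2 + 81*(T+7)*(T+6)*(T+7) = -(13230 + 5103*T + 648*T^2 + 27*T^3)"
    by (simp add: algebra_simps eval_nat_numeral)
  also have "\<dots> \<le> 0"
  proof -
    have "0 \<le> T^2" "0 \<le> T^3" "0 \<le> T^4" "0 \<le> T^5" using T by simp_all
    thus ?thesis using T by linarith
  qed
  finally show ?thesis .
qed

lemma neg5: "0 \<le> T \<Longrightarrow> 540*(T+7)^2 - 810*(T+6)*(T+7) + 243*(T+6)*(T+5) \<le> 0" for T :: real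
proof -
  assume T: "0 \<le> T"
  have "540*(T+7)^2 - 810*(T+6)*(T+7) + 243*(T+6)*(T+5) = -(270 + 297*T + 27*T^2)"
    by (simp add: algebra_simps eval_nat_numeral)
  also have "\<dots> \<le> 0"
  proof -
    have "0 \<le> T^2" "0 \<le> T^3" "0 \<le> T^4" "0 \<le> T^5" using T by simp_all
    thus ?thesis using T by linarith
  qed
  finally show ?thesis .
qed

lemma Ptilde:
  fixes T :: real
  shows "240000 * ((T+11) * (-2*(T+10)*(T+7)^5 + 3*(T+10)*(T+9)*(T+7)^4))
     + 851 * (T+11)^2 * (24 * (2*(T+7)^5 - 12*(T+9)*(T+7)^4 + 9*(T+9)*(T+8)*(T+7)^3)
     + 12 * (T+9) * (18*(T+7)^4 - 54*(T+8)*(T+7)^3 + 27*(T+8)*(T+7)*(T+7)^2)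
     + 4 * ((T+9)*(T+8)) * (108*(T+7)^3 - 216*(T+7)*(T+7)^2 + 81*(T+7)*(T+6)*(T+7))
     + ((T+9)*(T+8)*(T+7)) * (540*(T+7)^2 - 810*(T+6)*(T+7) + 243*(T+6)*(T+5)))
   = 65888915400 + 56473555830 * T + 20368415139 * T^2 + 3974926611 * T^3
     + 449256114 * T^4 + 29067144 * T^5 + 978915 * T^6 + 12783 * T^7"
  by (simp add: algebra_simps eval_nat_numeral)

lemma Ptilde_pos:
  fixes T :: real
  assumes T: "0 \<le> T"
  shows "0 < 240000 * ((T+11) * (-2*(T+10)*(T+7)^5 + 3*(T+10)*(T+9)*(T+7)^4))
     + 851 * (T+11)^2 * (24 * (2*(T+7)^5 - 12*(T+9)*(T+7)^4 + 9*(T+9)*(T+8)*(T+7)^3)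
     + 12 * (T+9) * (18*(T+7)^4 - 54*(T+8)*(T+7)^3 + 27*(T+8)*(T+7)*(T+7)^2)
     + 4 * ((T+9)*(T+8)) * (108*(T+7)^3 - 216*(T+7)*(T+7)^2 + 81*(T+7)*(T+6)*(T+7))
     + ((T+9)*(T+8)*(T+7)) * (540*(T+7)^2 - 810*(T+6)*(T+7) + 243*(T+6)*(T+5)))"
  unfolding Ptilde
proof -
  have "0 \<le> T^2" "0 \<le> T^3" "0 \<le> T^4" "0 \<le> T^5" "0 \<le> T^6" "0 \<le> T^7" using T by simp_all
  thus "0 < 65888915400 + 56473555830 * T + 20368415139 * T^2 + 3974926611 * T^3
     + 449256114 * T^4 + 29067144 * T^5 + 978915 * T^6 + 12783 * T^7" using T by linarith
qed

lemma combine: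
  fixes N T w1 w2 w3 w4 w5 :: real
  shows "240000 * (N*w1 + 0.0851*N^2*w2 + 0.0851*N^2*((T+9)/2)*w3 + 0.0851*N^2*((T+9)*(T+8)/6)*w4
      + 0.0851*N^2*((T+9)*(T+8)*(T+7)/24)*w5)
    = 240000 * (N * w1) + 851 * N^2 * (24 * w2 + 12 * (T+9) * w3 + 4 * ((T+9)*(T+8)) * w4
      + ((T+9)*(T+8)*(T+7)) * w5)"
  by (simp add: field_simps)

lemma num_nonneg:
  fixes K J :: real
  assumes K: "K = 6 \<or> K \<ge> 7" and J: "J \<ge> 2"
  shows "0 \<le> K*(K-1)*(K+J-4)^2 - 6*K*J*(K+J-4) + 9*J*(J-1)"
  using K
proof
  assume "K = 6"
  hence "K*(K-1)*(K+J-4)^2 - 6*K*J*(K+J-4) + 9*J*(J-1) = 3*J^2 + 39*J + 120"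
    by (simp add: algebra_simps power2_eq_square)
  also have "\<dots> \<ge> 0" using J by (simp add: add_nonneg_nonneg)
  finally show ?thesis by simp
next
  assume K7: "K \<ge> 7"
  have "K*(K-1)*(K+J-4)^2 - 6*K*J*(K+J-4) + 9*J*(J-1)
      = K*(K+J-4)*((K-7)*(K+J) + 2*K + 4) + 9*J*(J-1)"
    by (simp add: algebra_simps power2_eq_square)
  also have "\<dots> \<ge> 0"
  proof -
    have "0 \<le> (K-7)*(K+J)" using K7 J by simp
    hence "0 \<le> (K-7)*(K+J) + 2*K + 4" using K7 by linarith
    moreover have "0 \<le> K*(K+J-4)" using K7 J by simp
    ultimately have "0 \<le> K*(K+J-4)*((K-7)*(K+J) + 2*K + 4)" by simp
    moreover have "0 \<le> 9*J*(J-1)" using J by simp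
    ultimately show ?thesis by linarith
  qed
  finally show ?thesis .
qed

lemma ww_fact:
  "ww (k+2) (j+2) p = p^k * (1-p)^j * (real (k+2) * real (k+1) * (1-p)^2
      - 2 * real (k+2) * real (j+2) * p * (1-p) + real (j+2) * real (j+1) * p^2)"
  by (simp add: ww_def algebra_simps power2_eq_square)

lemma ww_nonneg_big:
  assumes k: "6 \<le> k" and kN: "k \<le> N" and N: "11 \<le> N"
  shows "0 \<le> ww k (N - k) (3 / (real N - 1))"
proof -
  define p where "p = 3 / (real N - 1)"
  have Dp: "real N - 1 > 0" using N by simp
  have Dn: "real N - 1 \<noteq> 0" using Dp by simp
  have pD: "p * (real N - 1) = 3" unfolding p_def using Dn by (simp add: field_simps)
  have qD: "(1 - p) * (real N - 1) = real N - 4" using pD by (simp add: algebra_simps)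
  have p0: "0 < p" unfolding p_def using Dp by simp
  have p1: "p < 1" unfolding p_def using Dp N by (simp add: divide_less_eq)
  define k' where "k' = k - 2"
  have k': "k = k' + 2" unfolding k'_def using k by simp
  show ?thesis
  proof (cases "N - k")
    case 0
    thus ?thesis unfolding p_def[symmetric] using p0 by (simp add: ww_def)
  next
    case (Suc j0)
    show ?thesis
    proof (cases j0)
      case 0
      have Nk1: "N = k + 1" using Suc 0 kN by simp
      have eq: "ww k 1 p = p^k' * (real k * (real (k - 1) * (1 - p) - 2 * p))"
        unfolding k' by (simp add: ww_def algebra_simps)
      have "(real (k - 1) * (1 - p) - 2 * p) * (real N - 1) = real (k - 1) * ((1 - p) * (real N - 1)) - 2 * (p * (real N - 1))"
        by (simp add: algebra_simps)
      also have "\<dots> = real (k - 1) * (real N - 4) - 6" unfolding pD qD by simp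
      also have "\<dots> \<ge> 0"
      proof -
        have "real (k - 1) \<ge> 9" "real N - 4 \<ge> 7" using Nk1 N by auto
        hence "real (k - 1) * (real N - 4) \<ge> 9 * 7" by (intro mult_mono) auto
        thus ?thesis by linarith
      qed
      finally have "0 \<le> real (k - 1) * (1 - p) - 2 * p" using Dp by (simp add: zero_le_mult_iff)
      hence X: "0 \<le> real (k - 1) * (1 - p) - 2 * p" .
      have "0 \<le> p^k' * (real k * (real (k - 1) * (1 - p) - 2 * p))"
        using p0 X by (intro mult_nonneg_nonneg) (simp_all only: of_nat_0_le_iff zero_le_power less_imp_le)
      thus ?thesis unfolding p_def[symmetric] Suc 0 One_nat_def[symmetric] eq .
    next
      case (Suc j)
      have Nkj: "N - k = j + 2" using \<open>N - k = Suc j0\<close> Suc by simp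
      define K where "K = real k"
      define J where "J = real (j + 2)"
      have NKJ: "real N = K + J" unfolding K_def J_def using Nkj kN by linarith
      have fact: "ww k (N - k) p = p^k' * (1-p)^j * (K * (K - 1) * (1-p)^2
        - 2 * K * J * p * (1-p) + J * (J - 1) * p^2)"
      proof -
        have "ww k (N - k) p = ww (k'+2) (j+2) p" unfolding Nkj using k' by simp
        also have "\<dots> = p^k' * (1-p)^j * (real (k'+2) * real (k'+1) * (1-p)^2
          - 2 * real (k'+2) * real (j+2) * p * (1-p) + real (j+2) * real (j+1) * p^2)"
          by (rule ww_fact)
        also have "\<dots> = p^k' * (1-p)^j * (K * (K - 1) * (1-p)^2
          - 2 * K * J * p * (1-p) + J * (J - 1) * p^2)"
          unfolding K_def J_def k' by simp
        finally show ?thesis .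
      qed
      have "(K * (K - 1) * (1-p)^2 - 2 * K * J * p * (1-p) + J * (J - 1) * p^2) * (real N - 1)^2
        = K * (K - 1) * ((1-p) * (real N - 1))^2 - 2 * K * J * (p * (real N - 1)) * ((1-p) * (real N - 1))
          + J * (J - 1) * (p * (real N - 1))^2"
        by (simp add: algebra_simps power2_eq_square)
      also have "\<dots> = K*(K-1)*(K+J-4)^2 - 6*K*J*(K+J-4) + 9*J*(J-1)"
        by (simp only: pD qD) (simp add: NKJ algebra_simps power2_eq_square)
      also have "\<dots> \<ge> 0"
        by (rule num_nonneg) (use k in \<open>auto simp: K_def J_def\<close>)
      finally have "0 \<le> K * (K - 1) * (1-p)^2 - 2 * K * J * p * (1-p) + J * (J - 1) * p^2"
        using Dp by (simp add: zero_le_mult_iff)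
      moreover have "0 \<le> p^k' * (1-p)^j" using p0 p1 by simp
      ultimately show ?thesis unfolding p_def[symmetric] fact by simp
    qed
  qed
qed

lemma Nk_real_bound:
  assumes sg: "simple_graph V E" and k: "2 \<le> k"
    and m: "real (graph_size E) \<le> 0.0851 * (real (card V))\<^sup>2"
  shows "real (Nk V E k) \<le> 0.0851 * (real (card V))\<^sup>2 * real ((card V - 2) choose (k - 2)) / real (k - 1)"
proof -
  have "real (Nk V E k) * real (k - 1) \<le> real (graph_size E) * real ((card V - 2) choose (k - 2))"
    using Nk_bound[OF sg k] by (metis of_nat_le_iff of_nat_mult)
  also have "\<dots> \<le> 0.0851 * (real (card V))\<^sup>2 * real ((card V - 2) choose (k - 2))"
    by (rule mult_right_mono[OF m]) simp
  finally have A: "real (Nk V E k) * real (k - 1) \<le> 0.0851 * (real (card V))\<^sup>2 * real ((card V - 2) choose (k - 2))" .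
  have pos: "real (k - 1) > 0" using k by simp
  show ?thesis by (subst pos_le_divide_eq[OF pos]) (rule A)
qed

lemma g2_pos:
  assumes sg: "simple_graph V E" and n: "11 \<le> card V"
    and m: "real (graph_size E) \<le> 0.0851 * (real (card V))\<^sup>2"
  shows "0 < g2 V E (3 / (real (card V) - 1))"
proof -
  obtain t where t: "card V = t + 11" using le_Suc_ex[OF n] by (auto simp: add.commute)
  define T where "T = real t"
  define N where "N = real (card V)"
  have NT: "N = T + 11" unfolding N_def T_def t by simp
  define b where "b = 3 / (real (card V) - 1)"
  have Tnn: "0 \<le> T" unfolding T_def by simp
  have bT: "b = 3 / (T + 10)" unfolding b_def T_def t by simp
  define u where "u = 1 / (T + 10)"
  have upos: "0 < u" unfolding u_def using Tnn by simp
  have bu: "b = 3 * u" unfolding bT u_def by simp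
  have qu: "1 - b = (T + 7) * u" unfolding bT u_def using Tnn by (simp add: field_simps)
  have b0: "0 < b" using bu upos by simp
  have b1: "0 < 1 - b" using qu upos Tnn by simp
  define X where "X = (1-b)^t * (1-b)^4"
  have Xpos: "0 < X" unfolding X_def using b1 by simp
  define w1 where "w1 = -2*(T+10)*(T+7)^5 + 3*(T+10)*(T+9)*(T+7)^4"
  define w2 where "w2 = 2*(T+7)^5 - 12*(T+9)*(T+7)^4 + 9*(T+9)*(T+8)*(T+7)^3"
  define w3 where "w3 = 18*(T+7)^4 - 54*(T+8)*(T+7)^3 + 27*(T+8)*(T+7)*(T+7)^2"
  define w4 where "w4 = 108*(T+7)^3 - 216*(T+7)*(T+7)^2 + 81*(T+7)*(T+6)*(T+7)"
  define w5 where "w5 = 540*(T+7)^2 - 810*(T+6)*(T+7) + 243*(T+6)*(T+5)"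
  have e1: "ww 1 (card V - 1) b = X * (u^5 * w1)"
  proof -
    have "ww 1 (card V - 1) b = X * (-2*(T+10)*(1-b)^5 + (T+10)*(T+9)*b*(1-b)^4)"
      using ww1_eq[of t b] unfolding X_def t T_def by (simp add: algebra_simps)
    also have "-2*(T+10)*(1-b)^5 + (T+10)*(T+9)*b*(1-b)^4 = -2*(T+10)*((T+7)*u)^5 + (T+10)*(T+9)*(3*u)*((T+7)*u)^4"
      unfolding qu by (simp only: bu)
    finally show ?thesis unfolding sub1 w1_def .
  qed
  have e2: "ww 2 (card V - 2) b = X * (u^5 * w2)"
  proof -
    have "ww 2 (card V - 2) b = X * (2*(1-b)^5 - 4*(T+9)*b*(1-b)^4 + (T+9)*(T+8)*b^2*(1-b)^3)"
      using ww2_eq[of t b] unfolding X_def t T_def by (simp add: algebra_simps)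
    also have "2*(1-b)^5 - 4*(T+9)*b*(1-b)^4 + (T+9)*(T+8)*b^2*(1-b)^3 = 2*((T+7)*u)^5 - 4*(T+9)*(3*u)*((T+7)*u)^4 + (T+9)*(T+8)*(3*u)^2*((T+7)*u)^3"
      unfolding qu by (simp only: bu)
    finally show ?thesis unfolding sub2 w2_def .
  qed
  have e3: "ww 3 (card V - 3) b = X * (u^5 * w3)"
  proof -
    have "ww 3 (card V - 3) b = X * (6*b*(1-b)^4 - 6*(T+8)*b^2*(1-b)^3 + (T+8)*(T+7)*b^3*(1-b)^2)"
      using ww3_eq[of t b] unfolding X_def t T_def by (simp add: algebra_simps)
    also have "6*b*(1-b)^4 - 6*(T+8)*b^2*(1-b)^3 + (T+8)*(T+7)*b^3*(1-b)^2 = 6*(3*u)*((T+7)*u)^4 - 6*(T+8)*(3*u)^2*((T+7)*u)^3 + (T+8)*(T+7)*(3*u)^3*((T+7)*u)^2"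
      unfolding qu by (simp only: bu)
    finally show ?thesis unfolding sub3 w3_def .
  qed
  have e4: "ww 4 (card V - 4) b = X * (u^5 * w4)"
  proof -
    have "ww 4 (card V - 4) b = X * (12*b^2*(1-b)^3 - 8*(T+7)*b^3*(1-b)^2 + (T+7)*(T+6)*b^4*(1-b))"
      using ww4_eq[of t b] unfolding X_def t T_def by (simp add: algebra_simps)
    also have "12*b^2*(1-b)^3 - 8*(T+7)*b^3*(1-b)^2 + (T+7)*(T+6)*b^4*(1-b) = 12*(3*u)^2*((T+7)*u)^3 - 8*(T+7)*(3*u)^3*((T+7)*u)^2 + (T+7)*(T+6)*(3*u)^4*((T+7)*u)"
      unfolding qu by (simp only: bu)
    finally show ?thesis unfolding sub4 w4_def .
  qed
  have e5: "ww 5 (card V - 5) b = X * (u^5 * w5)"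
  proof -
    have "ww 5 (card V - 5) b = X * (20*b^3*(1-b)^2 - 10*(T+6)*b^4*(1-b) + (T+6)*(T+5)*b^5)"
      using ww5_eq[of t b] unfolding X_def t T_def by (simp add: algebra_simps)
    also have "20*b^3*(1-b)^2 - 10*(T+6)*b^4*(1-b) + (T+6)*(T+5)*b^5 = 20*(3*u)^3*((T+7)*u)^2 - 10*(T+6)*(3*u)^4*((T+7)*u) + (T+6)*(T+5)*(3*u)^5"
      unfolding qu by (simp only: bu)
    finally show ?thesis unfolding sub5 w5_def .
  qed
  have Xu: "0 < X * u^5" using Xpos upos by simp
  have n2: "w2 \<le> 0" unfolding w2_def by (rule neg2[OF Tnn])
  have s2: "X * (u^5 * w2) \<le> 0" using mult_nonneg_nonpos[of "X*u^5" w2] Xu n2 by (simp add: mult.assoc)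
  have n3: "w3 \<le> 0" unfolding w3_def by (rule neg3[OF Tnn])
  have s3: "X * (u^5 * w3) \<le> 0" using mult_nonneg_nonpos[of "X*u^5" w3] Xu n3 by (simp add: mult.assoc)
  have n4: "w4 \<le> 0" unfolding w4_def by (rule neg4[OF Tnn])
  have s4: "X * (u^5 * w4) \<le> 0" using mult_nonneg_nonpos[of "X*u^5" w4] Xu n4 by (simp add: mult.assoc)
  have n5: "w5 \<le> 0" unfolding w5_def by (rule neg5[OF Tnn])
  have s5: "X * (u^5 * w5) \<le> 0" using mult_nonneg_nonpos[of "X*u^5" w5] Xu n5 by (simp add: mult.assoc)
  define f where "f k = real (Nk V E k) * ww k (card V - k) b" for k
  have split: "(\<Sum>k\<le>card V. f k) = f 0 + f 1 + f 2 + f 3 + f 4 + f 5 + (\<Sum>i\<le>t+5. f (i+6))"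
  proof -
    have cV: "card V = Suc (Suc (Suc (Suc (Suc (Suc (t+5))))))" using t by simp
    show ?thesis unfolding cV by (simp only: sum.atMost_Suc_shift) (simp add: eval_nat_numeral add.assoc)
  qed
  have rest: "0 \<le> (\<Sum>i\<le>t+5. f (i+6))"
  proof (rule sum_nonneg)
    fix i assume "i \<in> {..t+5}"
    hence "i + 6 \<le> card V" using t by simp
    hence "0 \<le> ww (i+6) (card V - (i+6)) b" unfolding b_def by (intro ww_nonneg_big) (use n in auto)
    thus "0 \<le> f (i+6)" unfolding f_def by simp
  qed
  have f0: "f 0 = 0" unfolding f_def using Nk_zero[OF sg] by simp
  have f1: "f 1 = N * (X * (u^5 * w1))" unfolding f_def Nk_one[OF sg] e1 N_def by simp
  have cb: "card V - 2 = t + 9" using t by simp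
  define U2 where "U2 = 0.0851*N^2"
  define U3 where "U3 = 0.0851*N^2*((T+9)/2)"
  define U4 where "U4 = 0.0851*N^2*((T+9)*(T+8)/6)"
  define U5 where "U5 = 0.0851*N^2*((T+9)*(T+8)*(T+7)/24)"
  have f2: "U2 * (X * (u^5 * w2)) \<le> f 2"
  proof -
    have "real (Nk V E 2) \<le> U2" using Nk_real_bound[OF sg _ m, of 2] unfolding U2_def N_def by simp
    thus ?thesis unfolding f_def e2 by (rule mult_right_mono_neg) (rule s2)
  qed
  have f3: "U3 * (X * (u^5 * w3)) \<le> f 3"
  proof -
    have "real (Nk V E 3) \<le> U3" using Nk_real_bound[OF sg _ m, of 3] unfolding U3_def N_def cb T_def by simp
    thus ?thesis unfolding f_def e3 by (rule mult_right_mono_neg) (rule s3)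
  qed
  have f4: "U4 * (X * (u^5 * w4)) \<le> f 4"
  proof -
    have "real (Nk V E 4) \<le> U4" using Nk_real_bound[OF sg _ m, of 4] unfolding U4_def N_def cb T_def
      by (simp add: ch2)
    thus ?thesis unfolding f_def e4 by (rule mult_right_mono_neg) (rule s4)
  qed
  have f5: "U5 * (X * (u^5 * w5)) \<le> f 5"
  proof -
    have "real (Nk V E 5) \<le> U5" using Nk_real_bound[OF sg _ m, of 5] unfolding U5_def N_def cb T_def
      by (simp add: ch3)
    thus ?thesis unfolding f_def e5 by (rule mult_right_mono_neg) (rule s5)
  qed
  have inner: "0 < N*w1 + U2*w2 + U3*w3 + U4*w4 + U5*w5"
  proof -
    have "0 < 240000 * (N*w1 + U2*w2 + U3*w3 + U4*w4 + U5*w5)"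
      unfolding U2_def U3_def U4_def U5_def combine unfolding NT w1_def w2_def w3_def w4_def w5_def
      by (rule Ptilde_pos[OF Tnn])
    thus ?thesis by simp
  qed
  have "0 < (X * u^5) * (N*w1 + U2*w2 + U3*w3 + U4*w4 + U5*w5)" using Xu inner by simp
  also have "\<dots> = N * (X * (u^5 * w1)) + U2 * (X * (u^5 * w2)) + U3 * (X * (u^5 * w3))
      + U4 * (X * (u^5 * w4)) + U5 * (X * (u^5 * w5))" by (simp add: algebra_simps)
  also have "\<dots> \<le> f 0 + f 1 + f 2 + f 3 + f 4 + f 5 + (\<Sum>i\<le>t+5. f (i+6))"
    using f0 f1 f2 f3 f4 f5 rest by linarith
  also have "\<dots> = g2 V E b"
  proof -
    have G: "g2 V E b = (\<Sum>k\<le>card V. f k)" unfolding f_def by (rule g2_group[OF sg])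
    show ?thesis by (simp only: G split)
  qed
  finally show ?thesis unfolding b_def .
qed

theorem theorem3p4:
  fixes V :: "'a set" and E :: "'a \<Rightarrow> 'a \<Rightarrow> bool"
  assumes "simple_graph V E"
    and "real (graph_size E) \<le> 0.0851 * (real (card V))\<^sup>2"
    and "two_connected V E"
  shows "\<exists>x y. 0 < x \<and> x < y \<and> y < 1 \<and>
           inflection_point (nRel V E) x \<and> inflection_point (nRel V E) y"
proof -
  note sg = assms(1) and m = assms(2) and tc = assms(3)
  have cV: "connected_set V E V" and n3: "3 \<le> card V" using tc unfolding two_connected_def by auto
  have n: "11 \<le> card V"
  proof (rule ccontr)
    assume "\<not> 11 \<le> card V"
    hence "card V \<in> {3,4,5,6,7,8,9,10}" using n3 by auto
    moreover have "real (card V - 1) \<le> 0.0851 * (real (card V))\<^sup>2"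
      using size_ge[OF sg cV] m by (meson of_nat_le_iff order_trans)
    ultimately show False by (auto simp: power2_eq_square)
  qed
  define P where "P = pderiv (pderiv (Pf V E))"
  have g2P: "g2 V E = poly P" unfolding P_def by (rule g2_poly)
  have dd2: "deriv (deriv (nRel V E)) = poly P" unfolding deriv2_eq g2P ..
  define b where "b = 3 / (real (card V) - 1)"
  have b0: "0 < b" and b1: "b < 1" unfolding b_def using n by (simp_all add: divide_less_eq)
  have Pb: "poly P b > 0" using g2_pos[OF sg n m] unfolding b_def g2P .
  have P0: "poly P 0 < 0" using g2_zero[OF sg n3 m] unfolding g2P .
  have "\<exists>c. b < c \<and> c < 1 \<and> poly P c < 0"
  proof (rule ccontr)
    assume "\<not> (\<exists>c. b < c \<and> c < 1 \<and> poly P c < 0)"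
    hence nn: "\<And>c. b < c \<Longrightarrow> c < 1 \<Longrightarrow> 0 \<le> g2 V E c" unfolding g2P by force
    have g1le: "g1 V E y \<le> g1 V E 1" if "b \<le> y" "y < 1" for y
    proof -
      obtain z where z: "y < z" "z < 1" "g1 V E 1 - g1 V E y = (1 - y) * g2 V E z"
        using MVT2[OF \<open>y < 1\<close>, of "g1 V E" "g2 V E"] g1_D by blast
      have "0 \<le> g2 V E z" using nn z that by simp
      hence "0 \<le> (1 - y) * g2 V E z" using that by simp
      thus ?thesis using z by simp
    qed
    obtain z where z: "b < z" "z < 1" "nRel V E 1 - nRel V E b = (1 - b) * g1 V E z"
      using MVT2[OF b1, of "nRel V E" "g1 V E"] nRel_D1 by blast
    have "g1 V E z \<le> 0" using g1le[of z] z g1_one[OF sg tc] by simp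
    hence "(1 - b) * g1 V E z \<le> 0" using b1 by (simp add: mult_nonneg_nonpos)
    hence "nRel V E 1 \<le> nRel V E b" using z by simp
    moreover have "nRel V E b < 1" by (rule nRel_lt_one[OF sg]) (use b0 b1 in auto)
    ultimately show False using nRel_one[OF sg cV] by simp
  qed
  then obtain c where c: "b < c" "c < 1" "poly P c < 0" by blast
  obtain x where x: "0 < x" "x < b" and ex: "\<exists>e>0. (\<forall>y. x - e < y \<and> y < x \<longrightarrow> poly P y < 0) \<and>
          (\<forall>y. x < y \<and> y < x + e \<longrightarrow> poly P y > 0)"
    using sign_change_up[OF b0 P0 Pb] by blast
  obtain y where y: "b < y" "y < c" and ey: "\<exists>e>0. (\<forall>z. y - e < z \<and> z < y \<longrightarrow> poly (-P) z < 0) \<and>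
          (\<forall>z. y < z \<and> z < y + e \<longrightarrow> poly (-P) z > 0)"
    using sign_change_up[of b c "-P"] c Pb by auto
  have ix: "inflection_point (nRel V E) x" unfolding inflection_point_def dd2 using ex by blast
  have iy: "inflection_point (nRel V E) y" unfolding inflection_point_def dd2 using ey by auto
  show ?thesis using x y c ix iy by (intro exI[of _ x] exI[of _ y]) auto
qed

end
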